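(* Let $q$ be a prime power, $\eta\ge0$ an integer, $(\delta_T,\delta_X)\in\mathbb{Z}\times\mathbb{N}$ with $\delta=\delta_T+\eta\delta_X\ge0$. Let $M=T_1^{c_1}T_2^{c_2}X_1^{d_1}X_2^{d_2}$ and $M'=T_1^{c'_1}T_2^{c'_2}X_1^{d'_1}X_2^{d'_2}$ be two monomials of bidegree $(\delta_T,\delta_X)$. Then $\mathrm{ev}_{(\delta_T,\delta_X)}(M)=\mathrm{ev}_{(\delta_T,\delta_X)}(M')$ if and only if, for all $i,j\in\{1,2\}$: $q-1$ divides $d_i-d'_i$; $q-1$ divides $c_j-c'_j$; $d_i=0\Leftrightarrow d'_i=0$; and $c_j=0\Leftrightarrow c'_j=0$.
   Context: $R=\mathbb{F}_q[T_1,T_2,X_1,X_2]$; the bidegree of $T_1^{c_1}T_2^{c_2}X_1^{d_1}X_2^{d_2}$ is $(c_1+c_2-\eta d_1,d_1+d_2)$; $R(\delta_T,\delta_X)$ is the span of monomials of bidegree $(\delta_T,\delta_X)$. The Hirzebruch surface $\mathcal{H}_\eta$ is the quotient of $(\mathbb{A}^2\setminus\{0\})^2$ by $\mathbb{G}_m^2$ acting by $(\lambda,\mu)\cdot(t_1,t_2,x_1,x_2)=(\lambda t_1,\lambda t_2,\mu\lambda^{-\eta}x_1,\mu x_2)$; each of its $(q+1)^2$ $\mathbb{F}_q$-points $P$ has a unique representative of the form $(1,a,1,b)$, $(0,1,1,b)$, $(1,a,0,1)$ or $(0,1,0,1)$ ($a,b\in\mathbb{F}_q$), and $F(P)$ is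 $F$ evaluated there. $\mathrm{ev}_{(\delta_T,\delta_X)}(F)=(F(P))_{P\in\mathcal{H}_\eta(\mathbb{F}_q)}$. *)

theory Defs
  imports Main "HOL-Library.Cardinality"
begin

text \<open>The base field F_q is modelled as a finite field type 'a, with q = CARD('a).
  A monomial T1^c1 T2^c2 X1^d1 X2^d2 is represented by its exponent vector (c1,c2,d1,d2).\<close>

type_synonym expo = "nat \<times> nat \<times> nat \<times> nat"

definition hirz_bideg :: "nat \<Rightarrow> expo \<Rightarrow> int \<times> nat" where
  "hirz_bideg \<eta> m = (case m of (c1, c2, d1, d2) \<Rightarrow>
      (int c1 + int c2 - int \<eta> * int d1, d1 + d2))"

text \<open>Normalized representatives of the F_q-points of the Hirzebruch surface:
  (1,a,1,b), (0,1,1,b), (1,a,0,1), (0,1,0,1).\<close>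
definition hirz_points :: "('a::{finite,field} \<times> 'a \<times> 'a \<times> 'a) set" where
  "hirz_points =
     {(1, a, 1, b) | a b. True} \<union> {(0, 1, 1, b) | b. True} \<union>
     {(1, a, 0, 1) | a. True} \<union> {(0, 1, 0, 1)}"

definition mono_eval :: "expo \<Rightarrow> ('a::field \<times> 'a \<times> 'a \<times> 'a) \<Rightarrow> 'a" where
  "mono_eval m P = (case m of (c1, c2, d1, d2) \<Rightarrow> case P of (t1, t2, x1, x2) \<Rightarrow>
      t1 ^ c1 * t2 ^ c2 * x1 ^ d1 * x2 ^ d2)"

definition hirz_ev :: "expo \<Rightarrow> ('a::{finite,field} \<times> 'a \<times> 'a \<times> 'a) \<Rightarrow> 'a" where
  "hirz_ev m = (\<lambda>P. if P \<in> hirz_points then mono_eval m P else 0)"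

end

theory Submission
  imports Defs "HOL-Computational_Algebra.Polynomial"
begin

lemma fermat_fin:
  fixes x :: "'a::{finite,field}"
  assumes "x \<noteq> 0"
  shows "x ^ (CARD('a) - 1) = 1"
proof -
  let ?U = "UNIV - {0::'a}"
  have cU: "card ?U = CARD('a) - 1" by (simp add: card_Diff_singleton)
  have inj: "inj_on ((*) x) ?U" using assms by (auto simp: inj_on_def)
  have img: "(*) x ` ?U = ?U"
  proof
    show "(*) x ` ?U \<subseteq> ?U" using assms by auto
    show "?U \<subseteq> (*) x ` ?U"
    proof
      fix y assume "y \<in> ?U"
      then have "y = x * (y / x)" "y / x \<in> ?U" using assms by auto
      then show "y \<in> (*) x ` ?U" by blast
    qed
  qed
  have "prod (\<lambda>y. x * y) ?U = prod id ?U"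
    using prod.reindex[OF inj, of id] img by simp
  moreover have "prod (\<lambda>y. x * y) ?U = x ^ card ?U * prod id ?U"
    by (simp add: prod.distrib)
  moreover have "prod id ?U \<noteq> 0" by simp
  ultimately show ?thesis using cU by (metis mult_cancel_right1)
qed

lemma card_ge2: "CARD('a::{finite,field}) \<ge> 2"
proof -
  have "{0::'a, 1} \<subseteq> UNIV" by simp
  hence "card {0::'a, 1} \<le> CARD('a)" by (intro card_mono) auto
  thus ?thesis by simp
qed

lemma roots_bound:
  fixes r :: nat
  assumes "r > 0" and "\<forall>x::'a::{finite,field}. x \<noteq> 0 \<longrightarrow> x ^ r = 1"
  shows "CARD('a) - 1 \<le> r"
proof -
  define p :: "'a poly" where "p = monom 1 r - 1"
  have dp: "degree p = r" 
  proof -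
    have "p = monom 1 r + (- 1)" unfolding p_def by simp
    also have "degree \<dots> = degree (monom (1::'a) r)"
      using assms(1) by (intro degree_add_eq_left) (simp add: degree_monom_eq)
    finally show ?thesis by (simp add: degree_monom_eq)
  qed
  hence "p \<noteq> 0" using assms(1) by auto
  hence "card {x. poly p x = 0} \<le> r" using card_poly_roots_bound dp by metis
  moreover have "UNIV - {0} \<subseteq> {x. poly p x = 0}" using assms(2)
    by (auto simp: p_def poly_monom)
  hence "card (UNIV - {0::'a}) \<le> card {x. poly p x = 0}" by (intro card_mono) auto
  ultimately show ?thesis by (simp add: card_Diff_singleton)
qed

lemma pow_fun_eq:
  fixes c c' :: nat
  shows "(\<forall>x::'a::{finite,field}. x ^ c = x ^ c') \<longleftrightarrow>
     ((c = 0 \<longleftrightarrow> c' = 0) \<and> (int CARD('a) - 1) dvd (int c - int c'))"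
proof -
  let ?q = "CARD('a)"
  have q2: "?q \<ge> 2" by (rule card_ge2)
  have dvdiff: "(int ?q - 1) dvd (int c - int c') \<longleftrightarrow> (?q - 1) dvd (if c' \<le> c then c - c' else c' - c)"
  proof (cases "c' \<le> c")
    case True
    have "int ?q - 1 = int (?q - 1)" using q2 by simp
    moreover have "int c - int c' = int (c - c')" using True by simp
    ultimately show ?thesis using True by (simp only: of_nat_dvd_iff if_True)
  next
    case False
    have "int ?q - 1 = int (?q - 1)" using q2 by simp
    moreover have "int c - int c' = - int (c' - c)" using False by simp
    ultimately show ?thesis using False by (simp only: of_nat_dvd_iff dvd_minus_iff if_False)
  qed
  have key: "(\<forall>x::'a. x \<noteq> 0 \<longrightarrow> x ^ a = x ^ b) \<longleftrightarrow> (?q - 1) dvd (a - b)" if "b \<le> a" for a b :: nat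
  proof
    assume H: "\<forall>x::'a. x \<noteq> 0 \<longrightarrow> x ^ a = x ^ b"
    define r where "r = (a - b) mod (?q - 1)"
    have rlt: "r < ?q - 1" unfolding r_def using q2 by simp
    have "\<forall>x::'a. x \<noteq> 0 \<longrightarrow> x ^ r = 1"
    proof (intro allI impI)
      fix x :: 'a assume x: "x \<noteq> 0"
      have "x ^ a = x ^ (a - b) * x ^ b" using that by (simp add: power_add[symmetric])
      hence "x ^ (a - b) = 1" using H x by simp
      moreover have "x ^ (a - b) = (x ^ (?q - 1)) ^ ((a - b) div (?q - 1)) * x ^ r"
        unfolding r_def by (simp add: power_mult[symmetric] power_add[symmetric])
      ultimately show "x ^ r = 1" using fermat_fin[OF x] by simp
    qed
    hence "r = 0" using roots_bound[where 'a='a, of r] rlt by (cases "r = 0") auto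
    thus "(?q - 1) dvd (a - b)" unfolding r_def by auto
  next
    assume "(?q - 1) dvd (a - b)"
    then obtain m where m: "a - b = (?q - 1) * m" by auto
    show "\<forall>x::'a. x \<noteq> 0 \<longrightarrow> x ^ a = x ^ b"
    proof (intro allI impI)
      fix x :: 'a assume x: "x \<noteq> 0"
      have "x ^ a = x ^ (a - b) * x ^ b" using that by (simp add: power_add[symmetric])
      also have "x ^ (a - b) = 1" using m fermat_fin[OF x] by (simp add: power_mult)
      finally show "x ^ a = x ^ b" by simp
    qed
  qed
  have nz: "(\<forall>x::'a. x \<noteq> 0 \<longrightarrow> x ^ c = x ^ c') \<longleftrightarrow> (?q - 1) dvd (if c' \<le> c then c - c' else c' - c)"
    using key[of c' c] key[of c c'] by (cases "c' \<le> c") (auto simp: eq_commute)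
  have z: "((0::'a) ^ c = 0 ^ c') \<longleftrightarrow> (c = 0 \<longleftrightarrow> c' = 0)" by (simp add: power_0_left)
  have "(\<forall>x::'a. x ^ c = x ^ c') \<longleftrightarrow> ((0::'a) ^ c = 0 ^ c') \<and> (\<forall>x::'a. x \<noteq> 0 \<longrightarrow> x ^ c = x ^ c')"
    by metis
  thus ?thesis using nz z dvdiff by simp
qed

theorem proposition2p7:
  fixes \<eta> :: nat and \<delta>T :: int and \<delta>X :: nat
    and c1 c2 d1 d2 c1' c2' d1' d2' :: nat
  assumes "\<delta>T + int \<eta> * int \<delta>X \<ge> 0"
    and "hirz_bideg \<eta> (c1, c2, d1, d2) = (\<delta>T, \<delta>X)"
    and "hirz_bideg \<eta> (c1', c2', d1', d2') = (\<delta>T, \<delta>X)"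
  shows "(hirz_ev (c1, c2, d1, d2) = (hirz_ev (c1', c2', d1', d2')
            :: 'a::{finite,field} \<times> 'a \<times> 'a \<times> 'a \<Rightarrow> 'a))
    \<longleftrightarrow>
    ((int (CARD('a)) - 1) dvd (int d1 - int d1') \<and> (int (CARD('a)) - 1) dvd (int d2 - int d2') \<and>
     (int (CARD('a)) - 1) dvd (int c1 - int c1') \<and> (int (CARD('a)) - 1) dvd (int c2 - int c2') \<and>
     (d1 = 0 \<longleftrightarrow> d1' = 0) \<and> (d2 = 0 \<longleftrightarrow> d2' = 0) \<and>
     (c1 = 0 \<longleftrightarrow> c1' = 0) \<and> (c2 = 0 \<longleftrightarrow> c2' = 0))"
proof -
  let ?Q = "int (CARD('a)) - 1"
  have b1: "int d1 - int d1' = - (int d2 - int d2')" and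
       b2: "int c1 - int c1' = - (int c2 - int c2') + int \<eta> * (int d1 - int d1')"
    using assms(2,3) by (auto simp: hirz_bideg_def algebra_simps)
  show ?thesis
  proof
    assume E: "hirz_ev (c1, c2, d1, d2) = (hirz_ev (c1', c2', d1', d2')
            :: 'a::{finite,field} \<times> 'a \<times> 'a \<times> 'a \<Rightarrow> 'a)"
    have ev: "mono_eval (c1, c2, d1, d2) P = mono_eval (c1', c2', d1', d2') P"
      if "P \<in> (hirz_points :: ('a \<times> 'a \<times> 'a \<times> 'a) set)" for P
      using fun_cong[OF E, of P] that by (simp add: hirz_ev_def)
    have "\<forall>a::'a. a ^ c2 = a ^ c2'"
    proof
      fix a :: 'a
      have "(1, a, 1, 1) \<in> (hirz_points :: ('a \<times> 'a \<times> 'a \<times> 'a) set)" by (auto simp: hirz_points_def)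
      from ev[OF this] show "a ^ c2 = a ^ c2'" by (simp add: mono_eval_def)
    qed
    hence C2: "(c2 = 0 \<longleftrightarrow> c2' = 0) \<and> ?Q dvd (int c2 - int c2')" by (simp add: pow_fun_eq)
    have "\<forall>b::'a. b ^ d2 = b ^ d2'"
    proof
      fix b :: 'a
      have "(1, 1, 1, b) \<in> (hirz_points :: ('a \<times> 'a \<times> 'a \<times> 'a) set)" by (auto simp: hirz_points_def)
      from ev[OF this] show "b ^ d2 = b ^ d2'" by (simp add: mono_eval_def)
    qed
    hence D2: "(d2 = 0 \<longleftrightarrow> d2' = 0) \<and> ?Q dvd (int d2 - int d2')" by (simp add: pow_fun_eq)
    have "(0, 1, 1, 1) \<in> (hirz_points :: ('a \<times> 'a \<times> 'a \<times> 'a) set)" by (auto simp: hirz_points_def)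
    from ev[OF this] have "(0::'a) ^ c1 = 0 ^ c1'" by (simp add: mono_eval_def)
    hence C1: "c1 = 0 \<longleftrightarrow> c1' = 0" by (simp add: power_0_left split: if_splits)
    have "(1, 1, 0, 1) \<in> (hirz_points :: ('a \<times> 'a \<times> 'a \<times> 'a) set)" by (auto simp: hirz_points_def)
    from ev[OF this] have "(0::'a) ^ d1 = 0 ^ d1'" by (simp add: mono_eval_def)
    hence D1: "d1 = 0 \<longleftrightarrow> d1' = 0" by (simp add: power_0_left split: if_splits)
    have dd1: "?Q dvd (int d1 - int d1')" unfolding b1 using D2 by (simp only: dvd_minus_iff)
    have dc1: "?Q dvd (int c1 - int c1')" unfolding b2
      by (intro dvd_add dvd_mult) (use C2 dd1 in \<open>simp_all only: dvd_minus_iff\<close>)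
    show "?Q dvd (int d1 - int d1') \<and> ?Q dvd (int d2 - int d2') \<and>
     ?Q dvd (int c1 - int c1') \<and> ?Q dvd (int c2 - int c2') \<and>
     (d1 = 0 \<longleftrightarrow> d1' = 0) \<and> (d2 = 0 \<longleftrightarrow> d2' = 0) \<and>
     (c1 = 0 \<longleftrightarrow> c1' = 0) \<and> (c2 = 0 \<longleftrightarrow> c2' = 0)"
      using dd1 dc1 C1 C2 D1 D2 by blast
  next
    assume H: "?Q dvd (int d1 - int d1') \<and> ?Q dvd (int d2 - int d2') \<and>
     ?Q dvd (int c1 - int c1') \<and> ?Q dvd (int c2 - int c2') \<and>
     (d1 = 0 \<longleftrightarrow> d1' = 0) \<and> (d2 = 0 \<longleftrightarrow> d2' = 0) \<and>
     (c1 = 0 \<longleftrightarrow> c1' = 0) \<and> (c2 = 0 \<longleftrightarrow> c2' = 0)"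
    have p1: "\<forall>x::'a. x ^ c1 = x ^ c1'" using H by (simp add: pow_fun_eq)
    have p2: "\<forall>x::'a. x ^ c2 = x ^ c2'" using H by (simp add: pow_fun_eq)
    have p3: "\<forall>x::'a. x ^ d1 = x ^ d1'" using H by (simp add: pow_fun_eq)
    have p4: "\<forall>x::'a. x ^ d2 = x ^ d2'" using H by (simp add: pow_fun_eq)
    show "hirz_ev (c1, c2, d1, d2) = (hirz_ev (c1', c2', d1', d2')
            :: 'a::{finite,field} \<times> 'a \<times> 'a \<times> 'a \<Rightarrow> 'a)"
      unfolding hirz_ev_def mono_eval_def using p1 p2 p3 p4 by (auto split: prod.splits)
  qed
qed

end
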